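(* Consider an open quantum system on a finite-dimensional Hilbert space $\mathcal H$ with Hamiltonian $H$ and a single coupling operator $L$, and let $V$ be a Lyapunov operator of the system (commuting with $H$). If $\mathfrak D(V)\ge cV^2$ for some constant $c>0$, then $V$ is asymptotically ground-state stable, i.e. $\operatorname{tr}(V\rho_t)\to0$ as $t\to\infty$ for every initial density state $\rho_0$.
   Context: The density state (positive semidefinite, trace one) evolves by $\dot\rho_t=-i[H,\rho_t]+L\rho_tL^\dagger-\tfrac12L^\dagger L\rho_t-\tfrac12\rho_tL^\dagger L$; for an observable $X$ commuting with $H$ the generator is $\mathcal G(X)=L^\dagger XL-\tfrac12L^\dagger LX-\tfrac12XL^\dagger L$ and $\frac{d}{dt}\operatorname{tr}(X\rho_t)=\operatorname{tr}(\mathcal G(X)\rho_t)$. Standing assumption: the observables considered commute with $H$. A Lyapunov operator is a self-adjoint $V\ge0$ whose smallest eigenvalue is $0$ and with $\mathcal G(V)\le0$. The dissipation functional is $\mathfrak D(X)=\mathcal G(X^\dagger X)-\mathcal G(X^\dagger)X-X^\dagger\mathcal G(X)$, which equals $[L^\dagger,X^\dagger][X,L]$. *)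

theory Defs
  imports "HOL-Analysis.Analysis"
begin

type_synonym 'n cmat = "complex^'n^'n"

definition adj :: "'n::finite cmat \<Rightarrow> 'n cmat" where
  "adj A = (\<chi> i j. cnj (A $ j $ i))"

definition herm_inner :: "complex^'n::finite \<Rightarrow> complex^'n \<Rightarrow> complex" where
  "herm_inner x y = (\<Sum>i\<in>UNIV. cnj (x $ i) * y $ i)"

definition self_adjoint :: "'n::finite cmat \<Rightarrow> bool" where
  "self_adjoint A \<longleftrightarrow> adj A = A"

definition psd :: "'n::finite cmat \<Rightarrow> bool" where
  "psd A \<longleftrightarrow> self_adjoint A \<and> (\<forall>x. 0 \<le> Re (herm_inner x (A *v x)))"

definition loewner_le :: "'n::finite cmat \<Rightarrow> 'n cmat \<Rightarrow> bool" where
  "loewner_le A B \<longleftrightarrow> psd (B - A)"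

definition density_state :: "'n::finite cmat \<Rightarrow> bool" where
  "density_state \<rho> \<longleftrightarrow> psd \<rho> \<and> trace \<rho> = 1"

definition lindblad :: "'n::finite cmat \<Rightarrow> 'n cmat \<Rightarrow> 'n cmat \<Rightarrow> 'n cmat" where
  "lindblad H L \<rho> =
     (\<chi> i j. - \<i> * (H ** \<rho> - \<rho> ** H) $ i $ j)
     + L ** \<rho> ** adj L
     - (\<chi> i j. (1/2) * (adj L ** L ** \<rho>) $ i $ j)
     - (\<chi> i j. (1/2) * (\<rho> ** adj L ** L) $ i $ j)"

text \<open>Heisenberg-picture generator (for observables commuting with H).\<close>
definition gen :: "'n::finite cmat \<Rightarrow> 'n cmat \<Rightarrow> 'n cmat" where
  "gen L X = adj L ** X ** L
     - (\<chi> i j. (1/2) * (adj L ** L ** X) $ i $ j)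
     - (\<chi> i j. (1/2) * (X ** adj L ** L) $ i $ j)"

definition dissipation :: "'n::finite cmat \<Rightarrow> 'n cmat \<Rightarrow> 'n cmat" where
  "dissipation L X = gen L (adj X ** X) - gen L (adj X) ** X - adj X ** gen L X"

text \<open>Lyapunov operator: self-adjoint, V \<ge> 0, smallest eigenvalue 0
  (i.e. 0 is an eigenvalue), and G(V) \<le> 0.\<close>
definition lyapunov :: "'n::finite cmat \<Rightarrow> 'n cmat \<Rightarrow> bool" where
  "lyapunov L V \<longleftrightarrow> psd V \<and> (\<exists>x. x \<noteq> 0 \<and> V *v x = 0) \<and> loewner_le (gen L V) 0"

end

theory Submission
  imports Defs
begin


definition smat :: "complex \<Rightarrow> complex^'n::finite^'n \<Rightarrow> complex^'n^'n" where
  "smat z A = (\<chi> i j. z * A $ i $ j)"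

definition outer :: "complex^'n::finite \<Rightarrow> complex^'n \<Rightarrow> complex^'n^'n" where
  "outer v w = (\<chi> i j. v $ i * cnj (w $ j))"

lemma adj_adj[simp]: "adj (adj A) = A"
  by (simp add: adj_def vec_eq_iff)

lemma adj_mult: "adj (A ** B) = adj B ** adj (A::complex^'n::finite^'n)"
  by (simp add: adj_def vec_eq_iff matrix_matrix_mult_def mult.commute)

lemma adj_add: "adj (A + B) = adj A + adj B"
  by (simp add: adj_def vec_eq_iff)

lemma adj_diff: "adj (A - B) = adj A - adj B"
  by (simp add: adj_def vec_eq_iff)

lemma adj_uminus: "adj (- A) = - adj A"
  by (simp add: adj_def vec_eq_iff)

lemma adj_zero[simp]: "adj 0 = 0"
  by (simp add: adj_def vec_eq_iff)

lemma adj_mat1[simp]: "adj (mat 1) = mat 1"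
  by (simp add: adj_def vec_eq_iff mat_def)

lemma adj_smat: "adj (smat z A) = smat (cnj z) (adj A)"
  by (simp add: adj_def smat_def vec_eq_iff)

lemma adj_scaleR: "adj (r *\<^sub>R A) = r *\<^sub>R adj A"
  by (simp add: adj_def vec_eq_iff)

lemma trace_adj: "trace (adj A) = cnj (trace A)"
  by (simp add: adj_def trace_def)

lemma trace_smat: "trace (smat z A) = z * trace A"
  by (simp add: smat_def trace_def sum_distrib_left)

lemma trace_scaleR: "trace (r *\<^sub>R (A::complex^'n::finite^'n)) = of_real r * trace A"
proof -
  have "trace (r *\<^sub>R A) = r *\<^sub>R trace A" by (simp add: trace_def scaleR_sum_right)
  then show ?thesis by (simp add: scaleR_conv_of_real)
qed

lemma smat_mult_left: "smat z A ** B = smat z (A ** B)"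
  by (simp add: smat_def vec_eq_iff matrix_matrix_mult_def sum_distrib_left mult.assoc)

lemma smat_mult_right: "A ** smat z B = smat z (A ** B)"
  by (simp add: smat_def vec_eq_iff matrix_matrix_mult_def sum_distrib_left mult_ac)

lemma smat_add: "smat z (A + B) = smat z A + smat z B"
  by (simp add: smat_def vec_eq_iff algebra_simps)

lemma smat_diff: "smat z (A - B) = smat z A - smat z B"
  by (simp add: smat_def vec_eq_iff algebra_simps)

lemma smat_scaleR: "smat z (r *\<^sub>R A) = r *\<^sub>R smat z A"
  by (simp add: smat_def vec_eq_iff scaleR_conv_of_real mult_ac)

lemma smat_mult_vec: "smat z A *v x = z *s (A *v x)"
  by (simp add: smat_def vec_eq_iff matrix_vector_mult_def sum_distrib_left mult.assoc)

lemma mat1_smat: "smat z (mat 1) = mat z"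
  by (simp add: smat_def vec_eq_iff mat_def)

lemma scaleR_mult_left: "(r *\<^sub>R A) ** B = r *\<^sub>R (A ** (B::complex^'n::finite^'n))"
  by (simp add: scalar_matrix_assoc)

lemma scaleR_mult_right: "A ** (r *\<^sub>R B) = r *\<^sub>R (A ** (B::complex^'n::finite^'n))"
  by (simp add: matrix_scalar_ac scalar_matrix_assoc)

lemma matrix_diff_ldistrib: "(A::complex^'n::finite^'n) ** (B - C) = A ** B - A ** C"
  by (simp add: vec_eq_iff matrix_matrix_mult_def algebra_simps sum_subtractf)

lemma matrix_diff_rdistrib: "((A::complex^'n::finite^'n) - B) ** C = A ** C - B ** C"
  by (simp add: vec_eq_iff matrix_matrix_mult_def algebra_simps sum_subtractf)

lemma matrix_add_rdistrib': "((A::complex^'n::finite^'n) + B) ** C = A ** C + B ** C"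
  by (simp add: vec_eq_iff matrix_matrix_mult_def algebra_simps sum.distrib)

lemma matrix_uminus_left: "(- (A::complex^'n::finite^'n)) ** B = - (A ** B)"
  by (simp add: vec_eq_iff matrix_matrix_mult_def sum_negf)

lemma matrix_uminus_right: "(A::complex^'n::finite^'n) ** (- B) = - (A ** B)"
  by (simp add: vec_eq_iff matrix_matrix_mult_def sum_negf)

lemma herm_inner_adj: "herm_inner x (A *v y) = herm_inner (adj A *v x) y"
proof -
  have "herm_inner x (A *v y) = (\<Sum>i\<in>UNIV. \<Sum>j\<in>UNIV. cnj (x$i) * A$i$j * y$j)"
    unfolding herm_inner_def matrix_vector_mult_def by (simp add: sum_distrib_left mult.assoc)
  also have "\<dots> = (\<Sum>j\<in>UNIV. \<Sum>i\<in>UNIV. cnj (x$i) * A$i$j * y$j)"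
    by (rule sum.swap)
  also have "\<dots> = herm_inner (adj A *v x) y"
    unfolding herm_inner_def adj_def matrix_vector_mult_def
    by (simp add: sum_distrib_left mult.commute mult.left_commute)
  finally show ?thesis .
qed

lemma herm_inner_cnj: "cnj (herm_inner x y) = herm_inner y x"
  by (simp add: herm_inner_def mult.commute)

lemma herm_inner_add_right: "herm_inner x (y + z) = herm_inner x y + herm_inner x z"
  by (simp add: herm_inner_def algebra_simps sum.distrib)

lemma herm_inner_diff_right: "herm_inner x (y - z) = herm_inner x y - herm_inner x z"
  by (simp add: herm_inner_def algebra_simps sum_subtractf)

lemma herm_inner_add_left: "herm_inner (x + y) z = herm_inner x z + herm_inner y z"
  by (simp add: herm_inner_def algebra_simps sum.distrib)

lemma herm_inner_diff_left: "herm_inner (x - y) z = herm_inner x z - herm_inner y z"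
  by (simp add: herm_inner_def algebra_simps sum_subtractf)

lemma herm_inner_smult_right: "herm_inner x (c *s y) = c * herm_inner x y"
  by (simp add: herm_inner_def sum_distrib_left mult_ac)

lemma herm_inner_smult_left: "herm_inner (c *s x) y = cnj c * herm_inner x y"
  by (simp add: herm_inner_def sum_distrib_left mult_ac)

lemma herm_inner_zero_right[simp]: "herm_inner x 0 = 0"
  by (simp add: herm_inner_def)

lemma herm_inner_zero_left[simp]: "herm_inner 0 x = 0"
  by (simp add: herm_inner_def)

lemma Re_herm_inner: "Re (herm_inner x y) = inner x y"
  by (simp add: herm_inner_def inner_vec_def inner_complex_def)

lemma herm_inner_self: "herm_inner x x = of_real ((norm x)\<^sup>2)"
proof -
  have "herm_inner x x = (\<Sum>i\<in>UNIV. of_real ((norm (x$i))\<^sup>2))"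
    unfolding herm_inner_def by (rule sum.cong) (simp_all add: complex_norm_square mult.commute del: of_real_power)
  also have "\<dots> = of_real (\<Sum>i\<in>UNIV. (norm (x$i))\<^sup>2)" by simp
  also have "(\<Sum>i\<in>UNIV. (norm (x$i))\<^sup>2) = (norm x)\<^sup>2"
    by (simp add: power2_norm_eq_inner inner_vec_def)
  finally show ?thesis .
qed

lemma herm_inner_self_eq0: "herm_inner x x = 0 \<longleftrightarrow> x = 0"
  by (simp add: herm_inner_self)

lemma outer_mult_vec: "outer v w *v x = herm_inner w x *s v"
  by (simp add: outer_def vec_eq_iff matrix_vector_mult_def herm_inner_def sum_distrib_left mult_ac)

lemma adj_outer: "adj (outer v v) = outer v v"
  by (simp add: adj_def outer_def vec_eq_iff mult.commute)

lemma trace_outer: "trace (A ** outer v v) = herm_inner v (A *v v)"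
proof -
  have "trace (A ** outer v v) = (\<Sum>i\<in>UNIV. \<Sum>j\<in>UNIV. A$i$j * v$j * cnj (v$i))"
    unfolding trace_def outer_def matrix_matrix_mult_def by (simp add: mult.assoc)
  also have "\<dots> = herm_inner v (A *v v)"
    unfolding herm_inner_def matrix_vector_mult_def
    by (simp add: sum_distrib_left mult.commute mult.left_commute)
  finally show ?thesis .
qed

lemma quad_bound:
  fixes A :: "complex^'n::finite^'n"
  shows "cmod (herm_inner x (A *v x)) \<le> of_nat (CARD('n))^2 * norm A * (norm x)\<^sup>2"
proof -
  have a: "cmod (A$i$j) \<le> norm A" for i j
    by (meson Finite_Cartesian_Product.norm_nth_le order.trans)
  have b: "cmod (x$i) \<le> norm x" for i by (rule Finite_Cartesian_Product.norm_nth_le)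
  have c: "cmod (A $ i $ j * x $ j) \<le> norm A * norm x" for i j
    by (simp add: norm_mult mult_mono a b)
  have d: "cmod (\<Sum>j\<in>UNIV. A $ i $ j * x $ j) \<le> (\<Sum>j\<in>(UNIV::'n set). norm A * norm x)" for i
    by (rule order.trans[OF norm_sum]) (rule sum_mono, rule c)
  have e: "cmod (cnj (x $ i) * (\<Sum>j\<in>UNIV. A $ i $ j * x $ j)) \<le> norm x * (\<Sum>j\<in>(UNIV::'n set). norm A * norm x)" for i
    unfolding norm_mult complex_mod_cnj by (rule mult_mono[OF b d]) auto
  have "cmod (herm_inner x (A *v x)) \<le> (\<Sum>i\<in>(UNIV::'n set). norm x * (\<Sum>j\<in>(UNIV::'n set). norm A * norm x))"
  proof -
    have "herm_inner x (A *v x) = (\<Sum>i\<in>UNIV. cnj (x$i) * (\<Sum>j\<in>UNIV. A$i$j * x$j))"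
      by (simp add: herm_inner_def matrix_vector_mult_def)
    then show ?thesis by (metis (no_types, lifting) e norm_sum order_trans sum_mono)
  qed
  also have "\<dots> = of_nat (CARD('n))^2 * norm A * (norm x)\<^sup>2"
    by (simp add: power2_eq_square)
  finally show ?thesis .
qed



abbreviation qf :: "complex^'n::finite^'n \<Rightarrow> complex^'n \<Rightarrow> complex" where
  "qf A x \<equiv> herm_inner x (A *v x)"

lemma mult_vec_smult: "(A::complex^'n::finite^'n) *v (c *s x) = c *s (A *v x)"
  by (simp add: vec_eq_iff matrix_vector_mult_def sum_distrib_left mult_ac)

lemma scaleR_mult_vec: "((r::real) *\<^sub>R (A::complex^'n::finite^'n)) *v x = of_real r *s (A *v x)"
  by (simp add: vec_eq_iff matrix_vector_mult_def sum_distrib_left scaleR_conv_of_real[where 'a=complex] mult_ac)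

lemma herm_sym: "self_adjoint A \<Longrightarrow> herm_inner x (A *v y) = cnj (herm_inner y (A *v x))"
  by (metis herm_inner_adj herm_inner_cnj self_adjoint_def)

lemma herm_sym': "self_adjoint A \<Longrightarrow> herm_inner x (A *v y) = herm_inner (A *v x) y"
  by (metis herm_inner_adj self_adjoint_def)

lemma qf_real: "self_adjoint A \<Longrightarrow> qf A x = of_real (Re (qf A x))"
proof -
  assume sa: "self_adjoint A"
  have "qf A x = cnj (qf A x)" using herm_sym[OF sa, of x x] .
  then have "Im (qf A x) = 0" by (metis cnj.sel(2) equation_minus_iff complex.sel(2) Im_complex_of_real
     complex_eq_iff neg_equal_zero)
  then show ?thesis by (simp add: complex_eq_iff)
qed

lemma qf_expand: "qf A (x + c *s y) = qf A x + c * herm_inner x (A *v y) + cnj c * herm_inner y (A *v x)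
   + cnj c * c * qf A y"
  by (simp add: matrix_vector_right_distrib mult_vec_smult herm_inner_add_left herm_inner_add_right
      herm_inner_smult_left herm_inner_smult_right algebra_simps)

lemma psd_kernel:
  assumes "psd A" "Re (qf A x) = 0"
  shows "A *v x = 0"
proof -
  have sa: "self_adjoint A" using assms(1) psd_def by blast
  define y where "y = A *v x"
  define a where "a = (norm y)\<^sup>2"
  define b where "b = Re (qf A y)"
  have b0: "b \<ge> 0" using assms(1) by (simp add: psd_def b_def)
  have hyx: "herm_inner y (A *v x) = of_real a" by (simp add: y_def a_def herm_inner_self)
  have hxy: "herm_inner x (A *v y) = of_real a" using herm_sym[OF sa, of x y] hyx by simp
  have key: "0 \<le> 2 * s * a + s * s * b" for s :: real
  proof -
    have e: "qf A (x + of_real s *s y) = qf A x + of_real s * of_real a + of_real s * of_real a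
       + of_real (s * s) * qf A y"
      unfolding qf_expand hyx hxy by simp
    have "0 \<le> Re (qf A (x + of_real s *s y))" using assms(1) by (simp add: psd_def)
    also have "\<dots> = Re (qf A x) + s * a + s * a + s * s * Re (qf A y)"
      unfolding e by simp
    also have "\<dots> = 2 * s * a + s * s * b" using assms(2) by (simp add: b_def)
    finally show ?thesis .
  qed
  have "a = 0"
  proof (rule ccontr)
    assume "a \<noteq> 0"
    then have a0: "a > 0" by (simp add: a_def)
    have bp: "b + 1 > 0" using b0 by simp
    define s where "s = - a / (b + 1)"
    have "0 \<le> 2 * s * a + s * s * b" by (rule key)
    then have "0 \<le> (b+1) * (b+1) * (2 * s * a + s * s * b)" using bp by simp
    also have "(b+1) * (b+1) * (2 * s * a + s * s * b) = a * a * (- b - 2)"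
    proof -
      have "(b + 1) * s = - a" using bp by (simp add: s_def)
      then show ?thesis by algebra
    qed
    also have "\<dots> < 0" using a0 b0 by (simp add: mult_pos_neg)
    finally show False by simp
  qed
  then show ?thesis by (simp add: a_def y_def)
qed

lemma scaleR_smult: "(r::real) *\<^sub>R (x::complex^'n::finite) = of_real r *s x"
  by (simp add: vec_eq_iff scaleR_conv_of_real[where 'a=complex])

lemma qf_scale: "qf A (of_real r *s x) = of_real (r*r) * qf A x"
  by (simp add: mult_vec_smult herm_inner_smult_left herm_inner_smult_right)

lemma continuous_qf: "continuous_on S (\<lambda>x. Re (qf (A::complex^'n::finite^'n) x))"
proof -
  have "bounded_linear ((*v) A)" by (rule matrix_vector_mul_bounded_linear)
  then have "continuous_on S ((*v) A)" using linear_continuous_on by blast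
  then show ?thesis unfolding Re_herm_inner by (auto intro!: continuous_intros)
qed

lemma psd_eigen:
  fixes R :: "complex^'n::finite^'n"
  assumes "psd R" "R \<noteq> 0"
  shows "\<exists>v l. norm v = 1 \<and> l > 0 \<and> R *v v = of_real l *s v"
proof -
  have sa: "self_adjoint R" using assms(1) psd_def by blast
  let ?f = "\<lambda>x. Re (qf R x)"
  have ne: "sphere (0::complex^'n) 1 \<noteq> {}"
  proof -
    obtain e :: "complex^'n" where "e \<noteq> 0" using zero_neq_one[where 'a="complex^'n"] by blast
    then have "(1 / norm e) *\<^sub>R e \<in> sphere 0 1" by simp
    then show ?thesis by blast
  qed
  obtain v where v: "v \<in> sphere 0 1" and vmax: "\<And>y. y \<in> sphere 0 1 \<Longrightarrow> ?f y \<le> ?f v"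
    using continuous_attains_sup[OF compact_sphere ne continuous_qf] by blast
  define l where "l = ?f v"
  have nv: "norm v = 1" using v by simp
  have bound: "?f y \<le> l * (norm y)\<^sup>2" for y
  proof (cases "y = 0")
    case True then show ?thesis by simp
  next
    case False
    define y' where "y' = of_real (1 / norm y) *s y"
    have "norm y' = 1" using False
      unfolding y'_def scaleR_smult[symmetric] by simp
    then have "?f y' \<le> l" using vmax l_def by simp
    moreover have "?f y' = ?f y / (norm y)\<^sup>2"
      unfolding y'_def qf_scale by (simp add: power2_eq_square)
    ultimately show ?thesis using False by (simp add: field_simps)
  qed
  obtain y where "R *v y \<noteq> 0" using assms(2) matrix_eq[of R 0] by auto
  then have "?f y \<noteq> 0" using psd_kernel[OF assms(1)] by blast
  moreover have "?f y \<ge> 0" using assms(1) psd_def by blast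
  ultimately have "0 < ?f y" by simp
  with bound[of y] have lpos: "l > 0"
    by (smt (verit, best) zero_le_power2 mult_nonpos_nonneg)
  define u where "u = R *v v - of_real l *s v"
  have hvv: "herm_inner v v = 1" using nv by (simp add: herm_inner_self)
  have qv: "qf R v = of_real l" using qf_real[OF sa, of v] l_def by simp
  have hvu: "herm_inner v u = 0"
    by (simp add: u_def herm_inner_diff_right herm_inner_smult_right hvv qv)
  have huv: "herm_inner u v = 0" using hvu herm_inner_cnj by (metis complex_cnj_zero)
  have huRv: "herm_inner u (R *v v) = of_real ((norm u)\<^sup>2)"
  proof -
    have "R *v v = u + of_real l *s v" by (simp add: u_def)
    then show ?thesis by (simp add: herm_inner_add_right herm_inner_smult_right huv herm_inner_self)
  qed
  have "(norm u)\<^sup>2 = 0"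
  proof (rule ccontr)
    assume "(norm u)\<^sup>2 \<noteq> 0"
    then have a0: "(norm u)\<^sup>2 > 0" by simp
    define a where "a = (norm u)\<^sup>2"
    define C where "C = \<bar>l * a - ?f u\<bar> + 1"
    define s where "s = a / C"
    have C1: "C \<ge> 1" by (simp add: C_def)
    have s0: "s > 0" using a0 C1 by (simp add: s_def a_def)
    have e1: "?f (v + of_real s *s u) = l + 2 * s * a + s * s * ?f u"
    proof -
      have "herm_inner v (R *v u) = of_real a"
        using herm_sym[OF sa, of v u] huRv by (simp add: a_def)
      then show ?thesis unfolding qf_expand using qv huRv by (simp add: a_def)
    qed
    have e2: "(norm (v + of_real s *s u))\<^sup>2 = 1 + s * s * a"
    proof -
      have "herm_inner (v + of_real s *s u) (v + of_real s *s u) = herm_inner v v + of_real s * herm_inner v u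
          + of_real s * herm_inner u v + of_real s * of_real s * herm_inner u u"
        by (simp add: herm_inner_add_left herm_inner_add_right herm_inner_smult_left
            herm_inner_smult_right algebra_simps)
      also have "\<dots> = of_real (1 + s * s * a)"
        by (simp add: hvv hvu huv herm_inner_self a_def nv)
      finally show ?thesis unfolding herm_inner_self of_real_eq_iff .
    qed
    have "l + 2 * s * a + s * s * ?f u \<le> l * (1 + s * s * a)"
      using bound[of "v + of_real s *s u"] e1 e2 by simp
    then have "2 * s * a \<le> s * s * (l * a - ?f u)" by (simp add: algebra_simps)
    also have "\<dots> \<le> s * s * C" using s0 by (intro mult_left_mono) (auto simp: C_def)
    also have "\<dots> = s * a" using C1 by (simp add: s_def)
    finally have "2 * s * a \<le> s * a" .
    then show False using s0 a0 unfolding a_def by (simp add: mult_le_cancel_left)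
  qed
  then have "R *v v = of_real l *s v" by (simp add: u_def)
  then show ?thesis using nv lpos by blast
qed



lemma range_subspace: "subspace (range (\<lambda>y. (M::complex^'n::finite^'n) *v y))"
  by (rule linear_subspace_image[OF matrix_vector_mul_linear subspace_UNIV])

lemma psd_trace_nonneg_aux:
  assumes A: "psd (A::complex^'n::finite^'n)"
  shows "\<forall>R. psd R \<longrightarrow> dim (range (\<lambda>y. R *v y)) = d \<longrightarrow> 0 \<le> Re (trace (A ** R))"
proof (induction d rule: less_induct)
  case (less d)
  show ?case
  proof (intro allI impI)
    fix R :: "complex^'n^'n" assume R: "psd R" and d: "dim (range (\<lambda>y. R *v y)) = d"
    show "0 \<le> Re (trace (A ** R))"
    proof (cases "R = 0")
      case True then show ?thesis by (simp add: trace_0[simplified])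
    next
      case False
      have saR: "self_adjoint R" using R psd_def by blast
      obtain v l where nv: "norm v = 1" and l0: "l > 0" and Rv: "R *v v = of_real l *s v"
        using psd_eigen[OF R False] by blast
      have hvv: "herm_inner v v = 1" using nv by (simp add: herm_inner_self)
      define R' where "R' = R - l *\<^sub>R outer v v"
      have R'x: "R' *v x = R *v x - of_real l *s (herm_inner v x *s v)" for x
        by (simp add: R'_def matrix_vector_mult_diff_rdistrib scaleR_mult_vec outer_mult_vec)
      have saR': "self_adjoint R'"
        using saR by (simp add: self_adjoint_def R'_def adj_diff adj_scaleR adj_outer)
      have qR': "Re (qf R' x) \<ge> 0" for x
      proof -
        define \<alpha> where "\<alpha> = herm_inner v x"
        define w where "w = x - \<alpha> *s v"
        have xw: "x = w + \<alpha> *s v" by (simp add: w_def)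
        have hxv: "herm_inner x v = cnj \<alpha>" using herm_inner_cnj[of v x] by (simp add: \<alpha>_def)
        have hwv: "herm_inner w v = 0"
          by (simp add: w_def herm_inner_diff_left herm_inner_smult_left hxv hvv)
        have hvw: "herm_inner v w = 0"
          by (simp add: w_def herm_inner_diff_right herm_inner_smult_right \<alpha>_def hvv)
        have "qf R x = qf R w + \<alpha> * herm_inner w (R *v v) + cnj \<alpha> * herm_inner v (R *v w)
            + cnj \<alpha> * \<alpha> * qf R v"
          unfolding xw by (rule qf_expand)
        also have "herm_inner w (R *v v) = 0" by (simp add: Rv herm_inner_smult_right hwv)
        also have "herm_inner v (R *v w) = 0"
          by (simp add: herm_sym'[OF saR] Rv herm_inner_smult_left hvw)
        also have "qf R v = of_real l" by (simp add: Rv herm_inner_smult_right hvv)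
        finally have e1: "qf R x = qf R w + cnj \<alpha> * \<alpha> * of_real l" by simp
        have "qf R' x = qf R x - of_real l * \<alpha> * cnj \<alpha>"
          by (simp add: R'x herm_inner_diff_right herm_inner_smult_right hxv \<alpha>_def)
        then have "qf R' x = qf R w" using e1 by (simp add: algebra_simps)
        then show ?thesis using R unfolding psd_def by simp
      qed
      have psdR': "psd R'" using saR' qR' by (simp add: psd_def)
      have sub: "range (\<lambda>y. R' *v y) \<subseteq> range (\<lambda>y. R *v y)"
      proof
        fix z assume "z \<in> range (\<lambda>y. R' *v y)"
        then obtain y where z: "z = R' *v y" by blast
        have "R *v (y - herm_inner v y *s v) = z"
          by (simp add: z R'x matrix_vector_mult_diff_distrib mult_vec_smult Rv vec_eq_iff mult_ac)
        then show "z \<in> range (\<lambda>y. R *v y)" by (metis rangeI)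
      qed
      have vin: "v \<in> range (\<lambda>y. R *v y)"
      proof -
        have "R *v (of_real (1/l) *s v) = v" using l0
          by (simp add: mult_vec_smult Rv vec_eq_iff)
        then show ?thesis by (metis rangeI)
      qed
      have vnot: "v \<notin> range (\<lambda>y. R' *v y)"
      proof
        assume "v \<in> range (\<lambda>y. R' *v y)"
        then obtain y where y: "v = R' *v y" by blast
        have R'v: "R' *v v = 0" by (simp add: R'x Rv hvv)
        have "herm_inner v v = herm_inner y (R' *v v)"
          using herm_sym'[OF saR', of y v] y by simp
        then show False using R'v hvv by simp
      qed
      have "span (range (\<lambda>y. R' *v y)) \<subset> span (range (\<lambda>y. R *v y))"
      proof -
        have s1: "span (range (\<lambda>y. R' *v y)) = range (\<lambda>y. R' *v y)" using range_subspace span_eq_iff by blast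
        have s2: "span (range (\<lambda>y. R *v y)) = range (\<lambda>y. R *v y)" using range_subspace span_eq_iff by blast
        show ?thesis unfolding s1 s2 using sub vin vnot by blast
      qed
      then have dlt: "dim (range (\<lambda>y. R' *v y)) < d" using d dim_psubset by blast
      have "R = R' + l *\<^sub>R outer v v" by (simp add: R'_def)
      then have "trace (A ** R) = trace (A ** R') + of_real l * qf A v"
        by (simp add: matrix_add_ldistrib trace_add scaleR_mult_right trace_scaleR trace_outer)
      then have "Re (trace (A ** R)) = Re (trace (A ** R')) + l * Re (qf A v)" by simp
      moreover have "0 \<le> Re (trace (A ** R'))" using less.IH[OF dlt] psdR' by blast
      moreover have "0 \<le> Re (qf A v)" using A psd_def by blast
      ultimately show ?thesis using l0 by simp
    qed
  qed
qed

lemma psd_trace_nonneg: "psd A \<Longrightarrow> psd R \<Longrightarrow> 0 \<le> Re (trace (A ** R))"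
  using psd_trace_nonneg_aux by blast

lemma trace_herm_real:
  assumes "self_adjoint A" "self_adjoint B"
  shows "trace (A ** B) = of_real (Re (trace (A ** B)))"
proof -
  have "cnj (trace (A ** B)) = trace (adj (A ** B))" by (rule trace_adj[symmetric])
  also have "\<dots> = trace (B ** A)" using assms by (simp add: adj_mult self_adjoint_def)
  also have "\<dots> = trace (A ** B)" by (rule trace_mul_sym)
  finally have "cnj (trace (A ** B)) = trace (A ** B)" .
  then have "Im (trace (A ** B)) = 0" by (metis cnj.sel(2) neg_equal_zero)
  then show ?thesis by (simp add: complex_eq_iff)
qed

lemma psd_congr: "psd A \<Longrightarrow> psd (adj M ** A ** M)"
proof -
  assume A: "psd A"
  have "self_adjoint (adj M ** A ** M)"
    using A by (simp add: psd_def self_adjoint_def adj_mult matrix_mul_assoc)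
  moreover have "qf (adj M ** A ** M) x = qf A (M *v x)" for x
    by (simp add: matrix_vector_mul_assoc[symmetric] herm_inner_adj)
  ultimately show ?thesis using A by (simp add: psd_def)
qed

lemma psd_mat1: "psd (mat 1)"
  by (simp add: psd_def self_adjoint_def herm_inner_self)

lemma cs_real:
  fixes a B c :: real
  assumes "\<And>s. 0 \<le> a - 2 * s * B + s * s * B * c" "c \<ge> 0" "a \<ge> 0" "B \<ge> 0"
  shows "B \<le> a * c"
proof (cases "c = 0")
  case True
  have "B \<le> 0"
  proof (rule ccontr)
    assume "\<not> B \<le> 0"
    then have B0: "B > 0" by simp
    have "0 \<le> a - 2 * ((a + 1) / (2 * B)) * B" using assms(1)[of "(a+1)/(2*B)"] True by simp
    also have "\<dots> = -1" using B0 by (simp add: field_simps)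
    finally show False by simp
  qed
  then show ?thesis using True assms by simp
next
  case False
  then have c0: "c > 0" using assms(2) by simp
  have "0 \<le> a - 2 * (1/c) * B + (1/c) * (1/c) * B * c" by (rule assms(1))
  then have "0 \<le> a - B / c" using c0 by (simp add: field_simps)
  then show ?thesis using c0 by (simp add: field_simps)
qed

lemma cs_trace:
  fixes A Y \<rho> :: "complex^'n::finite^'n"
  assumes A: "psd A" and P: "psd \<rho>"
  shows "(cmod (trace (A ** Y ** \<rho>)))\<^sup>2 \<le> Re (trace (A ** \<rho>)) * Re (trace (adj Y ** A ** Y ** \<rho>))"
proof -
  define b where "b = trace (A ** Y ** \<rho>)"
  define a where "a = Re (trace (A ** \<rho>))"
  define c where "c = Re (trace (adj Y ** A ** Y ** \<rho>))"
  have saA: "adj A = A" using A psd_def self_adjoint_def by blast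
  have saP: "adj \<rho> = \<rho>" using P psd_def self_adjoint_def by blast
  have tb: "trace (adj Y ** A ** \<rho>) = cnj b"
  proof -
    have "cnj (trace (adj Y ** A ** \<rho>)) = trace (adj (adj Y ** A ** \<rho>))" by (rule trace_adj[symmetric])
    also have "\<dots> = trace (\<rho> ** (A ** Y))"
      by (simp add: adj_mult saA saP matrix_mul_assoc)
    also have "\<dots> = b" unfolding b_def by (rule trace_mul_sym)
    finally show ?thesis by (metis complex_cnj_cnj)
  qed
  have expand: "0 \<le> a + 2 * Re (z * b) + (cmod z)\<^sup>2 * c" for z
  proof -
    define M where "M = mat 1 + smat z Y"
    have "0 \<le> Re (trace (adj M ** A ** M ** \<rho>))"
      by (rule psd_trace_nonneg[OF psd_congr[OF A] P])
    also have "trace (adj M ** A ** M ** \<rho>) =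
       trace (A ** \<rho>) + z * b + cnj z * trace (adj Y ** A ** \<rho>) + cnj z * z * trace (adj Y ** A ** Y ** \<rho>)"
      by (simp add: M_def adj_add adj_smat matrix_add_ldistrib matrix_add_rdistrib' smat_mult_left
          smat_mult_right trace_add trace_smat b_def) (simp add: algebra_simps)
    also have "Re \<dots> = a + 2 * Re (z * b) + (cmod z)\<^sup>2 * c"
    proof -
      have e1: "cnj z * cnj b = cnj (z * b)" by simp
      have e2: "cnj z * z = of_real ((cmod z)\<^sup>2)" using complex_norm_square[of z] by (simp add: mult.commute)
      show ?thesis unfolding tb e1 e2 a_def c_def by simp
    qed
    finally show ?thesis .
  qed
  have a0: "a \<ge> 0" unfolding a_def by (rule psd_trace_nonneg[OF A P])
  have c0: "c \<ge> 0" unfolding c_def by (rule psd_trace_nonneg[OF psd_congr[OF A] P])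
  have "0 \<le> a - 2 * s * (cmod b)\<^sup>2 + s * s * (cmod b)\<^sup>2 * c" for s
  proof -
    have "0 \<le> a + 2 * Re ((- of_real s * cnj b) * b) + (cmod (- of_real s * cnj b))\<^sup>2 * c"
      by (rule expand)
    also have "Re ((- of_real s * cnj b) * b) = - s * (cmod b)\<^sup>2"
      by (simp add: mult.assoc complex_norm_square[symmetric] mult.commute[of "cnj b"] del: of_real_power)
    also have "(cmod (- of_real s * cnj b))\<^sup>2 = s * s * (cmod b)\<^sup>2"
      by (simp add: norm_mult power_mult_distrib power2_eq_square)
    finally show ?thesis by (simp add: algebra_simps)
  qed
  then have "(cmod b)\<^sup>2 \<le> a * c" using cs_real c0 a0 by simp
  then show ?thesis by (simp add: a_def b_def c_def)
qed



lemma lindblad_alt: "lindblad H L X = smat (- \<i>) (H ** X - X ** H) + L ** X ** adj L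
   - smat (1/2) (adj L ** L ** X) - smat (1/2) (X ** adj L ** L)"
  by (simp add: lindblad_def smat_def vec_eq_iff)

lemma gen_alt: "gen L X = adj L ** X ** L - smat (1/2) (adj L ** L ** X) - smat (1/2) (X ** adj L ** L)"
  by (simp add: gen_def smat_def vec_eq_iff)

lemma smat_uminus: "smat (- z) A = - smat z A"
  by (simp add: smat_def vec_eq_iff)

lemma trace_zero[simp]: "trace (0::complex^'n::finite^'n) = 0"
  by (simp add: trace_def)

lemma lindblad_add: "lindblad H L (A + B) = lindblad H L A + lindblad H L B"
  by (simp add: lindblad_alt matrix_add_ldistrib matrix_add_rdistrib' smat_add smat_diff algebra_simps)

lemma lindblad_diff: "lindblad H L (A - B) = lindblad H L A - lindblad H L B"
  by (simp add: lindblad_alt matrix_diff_ldistrib matrix_diff_rdistrib smat_add smat_diff algebra_simps)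

lemma lindblad_scaleR: "lindblad H L (r *\<^sub>R A) = r *\<^sub>R lindblad H L A"
  by (simp add: lindblad_alt scaleR_mult_left scaleR_mult_right smat_scaleR smat_diff scaleR_diff_right
       scaleR_add_right)

lemma linear_lindblad: "linear (lindblad H L)"
  by (rule linearI) (simp_all add: lindblad_add lindblad_scaleR)

lemma adj_lindblad:
  assumes "self_adjoint H"
  shows "adj (lindblad H L X) = lindblad H L (adj X)"
  using assms unfolding self_adjoint_def
  by (simp add: lindblad_alt adj_add adj_diff adj_smat adj_mult matrix_mul_assoc smat_diff smat_uminus algebra_simps)

lemma trace_lindblad:
  assumes "W ** H = H ** W"
  shows "trace (W ** lindblad H L X) = trace (gen L W ** X)"
proof -
  have t1: "trace (W ** (X ** H)) = trace (W ** (H ** X))"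
  proof -
    have "trace (W ** (X ** H)) = trace ((W ** X) ** H)" by (simp add: matrix_mul_assoc)
    also have "\<dots> = trace (H ** (W ** X))" by (rule trace_mul_sym)
    also have "\<dots> = trace (W ** (H ** X))" by (simp add: matrix_mul_assoc assms)
    finally show ?thesis .
  qed
  have t2: "trace (W ** (L ** X ** adj L)) = trace (adj L ** W ** L ** X)"
  proof -
    have "trace (W ** (L ** X ** adj L)) = trace ((W ** L ** X) ** adj L)" by (simp add: matrix_mul_assoc)
    also have "\<dots> = trace (adj L ** (W ** L ** X))" by (rule trace_mul_sym)
    also have "\<dots> = trace (adj L ** W ** L ** X)" by (simp add: matrix_mul_assoc)
    finally show ?thesis .
  qed
  have t4: "trace (W ** (X ** adj L ** L)) = trace (adj L ** L ** W ** X)"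
  proof -
    have "trace (W ** (X ** adj L ** L)) = trace ((W ** X) ** (adj L ** L))" by (simp add: matrix_mul_assoc)
    also have "\<dots> = trace ((adj L ** L) ** (W ** X))" by (rule trace_mul_sym)
    also have "\<dots> = trace (adj L ** L ** W ** X)" by (simp add: matrix_mul_assoc)
    finally show ?thesis .
  qed
  have "trace (W ** lindblad H L X) = - \<i> * (trace (W ** (H ** X)) - trace (W ** (X ** H)))
     + trace (W ** (L ** X ** adj L)) - 1/2 * trace (W ** (adj L ** L ** X))
     - 1/2 * trace (W ** (X ** adj L ** L))"
    by (simp add: lindblad_alt matrix_add_ldistrib matrix_diff_ldistrib smat_mult_right trace_add trace_sub
        trace_smat)
  also have "\<dots> = trace (adj L ** W ** L ** X) - 1/2 * trace (W ** adj L ** L ** X)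
     - 1/2 * trace (adj L ** L ** W ** X)"
    unfolding t1 t2 t4 by (simp add: matrix_mul_assoc)
  also have "\<dots> = trace (gen L W ** X)"
    by (simp add: gen_alt matrix_diff_rdistrib smat_mult_left trace_sub trace_smat)
  finally show ?thesis .
qed

lemma gen_one: "gen L (mat 1) = 0"
  by (simp add: gen_alt smat_diff[symmetric] smat_def vec_eq_iff)

lemma trace_lindblad0: "trace (lindblad H L X) = 0"
  using trace_lindblad[of "mat 1" H L X] by (simp add: gen_one)

lemma bl_Re_trace: "bounded_linear (\<lambda>X::complex^'n::finite^'n. Re (trace (W ** X)))"
  by (rule linear_conv_bounded_linear[THEN iffD1], rule linearI)
     (simp_all add: matrix_add_ldistrib trace_add scaleR_mult_right trace_scaleR)

lemma bl_Im_trace: "bounded_linear (\<lambda>X::complex^'n::finite^'n. Im (trace (W ** X)))"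
  by (rule linear_conv_bounded_linear[THEN iffD1], rule linearI)
     (simp_all add: matrix_add_ldistrib trace_add scaleR_mult_right trace_scaleR)

lemma bl_adj: "bounded_linear (adj :: complex^'n::finite^'n \<Rightarrow> _)"
  by (rule linear_conv_bounded_linear[THEN iffD1], rule linearI) (simp_all add: adj_add adj_scaleR)

lemma qf_add: "qf (A + B) x = qf A x + qf B x"
  by (simp add: matrix_vector_mult_add_rdistrib herm_inner_add_right)

lemma qf_diff: "qf (A - B) x = qf A x - qf B x"
  by (simp add: matrix_vector_mult_diff_rdistrib herm_inner_diff_right)

lemma qf_scaleR: "qf (r *\<^sub>R A) x = of_real r * qf A x"
  by (simp add: scaleR_mult_vec herm_inner_smult_right)

lemma qf_smat: "qf (smat z A) x = z * qf A x"
  by (simp add: smat_mult_vec herm_inner_smult_right)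

lemma bl_qf: "bounded_linear (\<lambda>X::complex^'n::finite^'n. Re (qf X x))"
  by (rule linear_conv_bounded_linear[THEN iffD1], rule linearI) (simp_all add: qf_add qf_scaleR)

lemma mono_deriv:
  fixes f :: "real \<Rightarrow> real"
  assumes d: "\<And>t. t \<ge> 0 \<Longrightarrow> (f has_real_derivative f' t) (at t within {0..})"
    and pos: "\<And>t. t > 0 \<Longrightarrow> f' t \<ge> 0"
    and ab: "0 \<le> a" "a \<le> b"
  shows "f a \<le> f b"
proof (rule DERIV_nonneg_imp_increasing_open[OF ab(2)])
  fix x assume x: "a < x" "x < b"
  then have x0: "x > 0" using ab by simp
  have d0: "(f has_real_derivative f' x) (at x within {0..})" using d x0 by simp
  have "(f has_real_derivative f' x) (at x within {0<..})"
    using has_field_derivative_subset[OF d0, of "{0<..}"] by fastforce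
  moreover have "at x within {0<..} = at x" using x0 by (intro at_within_open) auto
  ultimately have "(f has_real_derivative f' x) (at x)" by simp
  then show "\<exists>y. (f has_real_derivative y) (at x) \<and> 0 \<le> y" using pos x0 by blast
next
  show "continuous_on {a..b} f"
  proof (rule continuous_on_subset[of "{0..}"])
    show "continuous_on {0..} f"
      unfolding continuous_on_eq_continuous_within by (auto intro: DERIV_continuous[OF d])
  qed (use ab in auto)
qed

lemma uniq_lindblad:
  fixes Y :: "real \<Rightarrow> complex^'n::finite^'n"
  assumes d: "\<And>t. t \<ge> 0 \<Longrightarrow> (Y has_vector_derivative lindblad H L (Y t)) (at t within {0..})"
    and Y0: "Y 0 = 0" and t: "t \<ge> 0"
  shows "Y t = 0"
proof -
  obtain C where C: "\<And>Z. norm (lindblad H L Z) \<le> norm Z * C"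
    using bounded_linear.bounded[OF linear_conv_bounded_linear[THEN iffD1, OF linear_lindblad]] by blast
  define K where "K = 2 * \<bar>C\<bar>"
  define \<phi> where "\<phi> s = exp (- K * s) * (Y s \<bullet> Y s)" for s
  define \<phi>' where "\<phi>' s = exp (- K * s) * (2 * (Y s \<bullet> lindblad H L (Y s)) - K * (Y s \<bullet> Y s))" for s
  have der: "((\<lambda>s. - \<phi> s) has_real_derivative - \<phi>' s) (at s within {0..})" if "s \<ge> 0" for s
  proof -
    have "((\<lambda>s. Y s \<bullet> Y s) has_vector_derivative
        (Y s \<bullet> lindblad H L (Y s) + lindblad H L (Y s) \<bullet> Y s)) (at s within {0..})"
      by (rule bounded_bilinear.has_vector_derivative[OF bounded_bilinear_inner d[OF that] d[OF that]])
    then have i: "((\<lambda>s. Y s \<bullet> Y s) has_real_derivative (2 * (Y s \<bullet> lindblad H L (Y s)))) (at s within {0..})"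
      by (simp add: has_real_derivative_iff_has_vector_derivative inner_commute)
    have e: "((\<lambda>s. exp (- K * s)) has_real_derivative exp (- K * s) * (- K)) (at s within {0..})"
      by (auto intro!: derivative_eq_intros)
    have "(\<phi> has_real_derivative exp (- K * s) * (- K) * (Y s \<bullet> Y s) + exp (- K * s) * (2 * (Y s \<bullet> lindblad H L (Y s))))
        (at s within {0..})"
      unfolding \<phi>_def using DERIV_mult[OF e i] by (simp add: mult.commute)
    moreover have "exp (- K * s) * (- K) * (Y s \<bullet> Y s) + exp (- K * s) * (2 * (Y s \<bullet> lindblad H L (Y s))) = \<phi>' s"
      by (simp add: \<phi>'_def algebra_simps)
    ultimately show ?thesis using DERIV_minus by fastforce
  qed
  have np: "- \<phi>' s \<ge> 0" for s
  proof -
    have "Y s \<bullet> lindblad H L (Y s) \<le> norm (Y s) * norm (lindblad H L (Y s))"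
      using Cauchy_Schwarz_ineq2[of "Y s" "lindblad H L (Y s)"] by simp
    also have "\<dots> \<le> norm (Y s) * (norm (Y s) * C)" by (rule mult_left_mono[OF C norm_ge_zero])
    also have "\<dots> \<le> norm (Y s) * (norm (Y s) * \<bar>C\<bar>)"
      by (intro mult_left_mono) auto
    also have "\<dots> = \<bar>C\<bar> * (Y s \<bullet> Y s)"
      by (simp add: power2_norm_eq_inner[symmetric] power2_eq_square)
    finally have "2 * (Y s \<bullet> lindblad H L (Y s)) - K * (Y s \<bullet> Y s) \<le> 0" by (simp add: K_def)
    then have "\<phi>' s \<le> 0" unfolding \<phi>'_def by (simp add: mult_nonneg_nonpos)
    then show ?thesis by simp
  qed
  have "- \<phi> 0 \<le> - \<phi> t" by (rule mono_deriv[OF der np]) (use t in auto)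
  then have "exp (- K * t) * (Y t \<bullet> Y t) \<le> 0" using Y0 by (simp add: \<phi>_def)
  then have "Y t \<bullet> Y t \<le> 0" by (simp add: mult_le_0_iff)
  then show ?thesis by (metis inner_gt_zero_iff not_le)
qed



lemma lind_kernel:
  assumes Q: "psd Q" and Qx: "Q *v x = 0"
  shows "0 \<le> Re (qf (lindblad H L Q) x)"
proof -
  have saQ: "self_adjoint Q" using Q psd_def by blast
  have a: "qf (H ** Q) x = 0" by (simp add: matrix_vector_mul_assoc[symmetric] Qx)
  have b: "qf (Q ** H) x = 0"
    by (simp add: matrix_vector_mul_assoc[symmetric] herm_sym'[OF saQ] Qx)
  have c: "qf (adj L ** L ** Q) x = 0" by (simp add: matrix_vector_mul_assoc[symmetric] Qx)
  have d: "qf (Q ** adj L ** L) x = 0"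
    by (simp add: matrix_vector_mul_assoc[symmetric] herm_sym'[OF saQ] Qx)
  have e: "qf (L ** Q ** adj L) x = qf Q (adj L *v x)"
    by (simp add: matrix_vector_mul_assoc[symmetric] herm_inner_adj)
  have "qf (lindblad H L Q) x = qf Q (adj L *v x)"
    by (simp add: lindblad_alt qf_add qf_diff qf_smat a b c d e)
  then show ?thesis using Q unfolding psd_def by simp
qed

lemma unit_nonneg:
  assumes "\<And>u. norm u = 1 \<Longrightarrow> 0 \<le> Re (qf A u)"
  shows "0 \<le> Re (qf A y)"
proof (cases "y = 0")
  case True then show ?thesis by simp
next
  case False
  define u where "u = (1 / norm y) *\<^sub>R y"
  have nu: "norm u = 1" using False by (simp add: u_def)
  have "y = norm y *\<^sub>R u" using False by (simp add: u_def)
  then have yu: "y = of_real (norm y) *s u" by (simp add: scaleR_smult)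
  have "qf A (of_real (norm y) *s u) = of_real (norm y * norm y) * qf A u" by (rule qf_scale)
  then have "qf A y = of_real (norm y * norm y) * qf A u" using yu by metis
  then have "Re (qf A y) = norm y * norm y * Re (qf A u)" by simp
  then show ?thesis using assms[OF nu] by simp
qed

context
  fixes H L :: "complex^'n::finite^'n" and \<rho> :: "real \<Rightarrow> complex^'n^'n"
  assumes saH: "self_adjoint H"
    and d: "\<And>t. t \<ge> 0 \<Longrightarrow> (\<rho> has_vector_derivative lindblad H L (\<rho> t)) (at t within {0..})"
    and init: "density_state (\<rho> 0)"
begin

lemma deriv_Re_trace:
  "t \<ge> 0 \<Longrightarrow> ((\<lambda>t. Re (trace (W ** \<rho> t))) has_real_derivative Re (trace (W ** lindblad H L (\<rho> t))))
     (at t within {0..})"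
  unfolding has_real_derivative_iff_has_vector_derivative
  by (rule bounded_linear.has_vector_derivative[OF bl_Re_trace d])

lemma deriv_Im_trace:
  "t \<ge> 0 \<Longrightarrow> ((\<lambda>t. Im (trace (W ** \<rho> t))) has_real_derivative Im (trace (W ** lindblad H L (\<rho> t))))
     (at t within {0..})"
  unfolding has_real_derivative_iff_has_vector_derivative
  by (rule bounded_linear.has_vector_derivative[OF bl_Im_trace d])

lemma herm_rho: "t \<ge> 0 \<Longrightarrow> self_adjoint (\<rho> t)"
proof -
  assume t: "t \<ge> 0"
  define Y where "Y s = \<rho> s - adj (\<rho> s)" for s
  have "(Y has_vector_derivative lindblad H L (Y s)) (at s within {0..})" if "s \<ge> 0" for s
  proof -
    have "((\<lambda>s. adj (\<rho> s)) has_vector_derivative adj (lindblad H L (\<rho> s))) (at s within {0..})"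
      by (rule bounded_linear.has_vector_derivative[OF bl_adj d[OF that]])
    then have "(Y has_vector_derivative lindblad H L (\<rho> s) - adj (lindblad H L (\<rho> s))) (at s within {0..})"
      unfolding Y_def by (rule has_vector_derivative_diff[OF d[OF that]])
    then show ?thesis by (simp add: Y_def adj_lindblad[OF saH] lindblad_diff)
  qed
  moreover have "Y 0 = 0" using init by (simp add: Y_def density_state_def psd_def self_adjoint_def)
  ultimately have "Y t = 0" using uniq_lindblad t by blast
  then show ?thesis by (simp add: Y_def self_adjoint_def)
qed

lemma const_deriv0:
  fixes f :: "real \<Rightarrow> real"
  assumes "\<And>t. t \<ge> 0 \<Longrightarrow> (f has_real_derivative 0) (at t within {0..})" "t \<ge> 0"
  shows "f t = f 0"
proof -
  have "f 0 \<le> f t" by (rule mono_deriv[of f "\<lambda>_. 0"]) (use assms in auto)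
  moreover have "- f 0 \<le> - f t"
    by (rule mono_deriv[of "\<lambda>s. - f s" "\<lambda>_. 0"]) (use assms in \<open>auto intro: DERIV_minus[where D=0, simplified]\<close>)
  ultimately show ?thesis by simp
qed

lemma trace_rho: "t \<ge> 0 \<Longrightarrow> trace (\<rho> t) = 1"
proof -
  assume t: "t \<ge> 0"
  have "Re (trace (mat 1 ** \<rho> t)) = Re (trace (mat 1 ** \<rho> 0))"
  proof (rule const_deriv0[OF _ t])
    fix s :: real assume "s \<ge> 0"
    from deriv_Re_trace[OF this, of "mat 1"]
    show "((\<lambda>t. Re (trace (mat 1 ** \<rho> t))) has_real_derivative 0) (at s within {0..})"
      by (simp add: trace_lindblad0)
  qed
  moreover have "Im (trace (mat 1 ** \<rho> t)) = Im (trace (mat 1 ** \<rho> 0))"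
  proof (rule const_deriv0[OF _ t])
    fix s :: real assume "s \<ge> 0"
    from deriv_Im_trace[OF this, of "mat 1"]
    show "((\<lambda>t. Im (trace (mat 1 ** \<rho> t))) has_real_derivative 0) (at s within {0..})"
      by (simp add: trace_lindblad0)
  qed
  ultimately show ?thesis using init by (simp add: density_state_def complex_eq_iff)
qed


lemma psd_rho_aux:
  fixes \<epsilon> t :: real and x :: "complex^'n"
  assumes eps: "\<epsilon> > 0" and t: "t \<ge> 0" and x: "norm x = 1"
  shows "0 < Re (qf (\<rho> t) x) + \<epsilon> * exp ((of_nat CARD('n)^2 * norm (lindblad H L (mat 1)) + 1) * t)"
proof (rule ccontr)
  define N where "N = lindblad H L (mat 1)"
  define K where "K = of_nat CARD('n)^2 * norm N + 1"
  define g where "g s y = Re (qf (\<rho> s) y) + \<epsilon> * exp (K * s)" for s y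
  define n2 where "n2 = (of_nat CARD('n)^2 :: real)"
  have n20: "n2 \<ge> 0" by (simp add: n2_def)
  assume "\<not> ?thesis"
  then have gt: "g t x \<le> 0" by (simp add: g_def K_def N_def)
  define S where "S = {s. 0 \<le> s \<and> (\<exists>y. norm y = 1 \<and> g s y \<le> 0)}"
  have tS: "t \<in> S" using t x gt by (auto simp: S_def)
  define T where "T = Inf S"
  have bdd: "bdd_below S" by (rule bdd_belowI[of _ 0]) (auto simp: S_def)
  have T0: "0 \<le> T" unfolding T_def using tS by (intro cInf_greatest) (auto simp: S_def)
  have TS: "T \<le> s" if "s \<in> S" for s unfolding T_def by (rule cInf_lower[OF that bdd])
  have below: "g s y > 0" if "0 \<le> s" "s < T" "norm y = 1" for s y
    using TS[of s] that by (force simp: S_def)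
  have cont: "\<exists>\<delta>>0. \<forall>s\<ge>0. \<bar>s - T\<bar> < \<delta> \<longrightarrow> (\<forall>y. norm y = 1 \<longrightarrow> \<bar>g s y - g T y\<bar> < e)"
    if e: "e > 0" for e
  proof -
    define h where "h s = n2 * norm (\<rho> s - \<rho> T) + \<epsilon> * \<bar>exp (K * s) - exp (K * T)\<bar>" for s
    have "continuous (at T within {0..}) \<rho>"
      by (rule has_vector_derivative_continuous[OF d[OF T0]])
    then have "continuous (at T within {0..}) h" unfolding h_def
      by (intro continuous_intros) auto
    then obtain \<delta> where \<delta>: "\<delta> > 0" "\<And>s. s \<in> {0..} \<Longrightarrow> dist s T < \<delta> \<Longrightarrow> dist (h s) (h T) < e"
      using e unfolding continuous_within_eps_delta by metis
    have hT: "h T = 0" by (simp add: h_def)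
    have "\<bar>g s y - g T y\<bar> < e" if s: "0 \<le> s" "\<bar>s - T\<bar> < \<delta>" and y: "norm y = 1" for s y
    proof -
      have "\<bar>g s y - g T y\<bar> = \<bar>Re (qf (\<rho> s - \<rho> T) y) + \<epsilon> * (exp (K * s) - exp (K * T))\<bar>"
        unfolding g_def qf_diff by (simp add: algebra_simps)
      also have "\<dots> \<le> \<bar>Re (qf (\<rho> s - \<rho> T) y)\<bar> + \<epsilon> * \<bar>exp (K * s) - exp (K * T)\<bar>"
        using eps by (simp add: abs_mult abs_triangle_ineq[THEN order.trans])
      also have "\<bar>Re (qf (\<rho> s - \<rho> T) y)\<bar> \<le> n2 * norm (\<rho> s - \<rho> T)"
        using abs_Re_le_cmod[of "qf (\<rho> s - \<rho> T) y"] quad_bound[of y "\<rho> s - \<rho> T"] y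
        by (simp add: n2_def)
      also have "n2 * norm (\<rho> s - \<rho> T) + \<epsilon> * \<bar>exp (K * s) - exp (K * T)\<bar> = h s" by (simp add: h_def)
      also have "h s < e" using \<delta>(2)[of s] s hT by (simp add: dist_real_def)
      finally show ?thesis by simp
    qed
    then show ?thesis using \<delta>(1) by blast
  qed
  have ne: "sphere (0::complex^'n) 1 \<noteq> {}"
  proof -
    obtain e :: "complex^'n" where "e \<noteq> 0" using zero_neq_one[where 'a="complex^'n"] by blast
    then have "(1 / norm e) *\<^sub>R e \<in> sphere 0 1" by simp
    then show ?thesis by blast
  qed
  obtain x0 where x0s: "x0 \<in> sphere 0 1" and x0min: "\<And>y. y \<in> sphere 0 1 \<Longrightarrow> Re (qf (\<rho> T) x0) \<le> Re (qf (\<rho> T) y)"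
    using continuous_attains_inf[OF compact_sphere ne continuous_qf] by blast
  have nx0: "norm x0 = 1" using x0s by simp
  define m where "m = g T x0"
  have mmin: "m \<le> g T y" if "norm y = 1" for y using x0min[of y] that by (simp add: m_def g_def)
  show False
  proof (cases "m > 0")
    case True
    obtain \<delta> where \<delta>: "\<delta> > 0" "\<And>s y. s \<ge> 0 \<Longrightarrow> \<bar>s - T\<bar> < \<delta> \<Longrightarrow> norm y = 1 \<Longrightarrow> \<bar>g s y - g T y\<bar> < m"
      using cont[OF True] by blast
    have "T + \<delta> \<le> s" if sS: "s \<in> S" for s
    proof (rule ccontr)
      assume "\<not> T + \<delta> \<le> s"
      moreover obtain y where "norm y = 1" "g s y \<le> 0" "s \<ge> 0" using sS by (auto simp: S_def)
      moreover have "T \<le> s" by (rule TS[OF sS])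
      ultimately show False using \<delta>(2)[of s y] mmin[of y] by force
    qed
    then have "T + \<delta> \<le> T" unfolding T_def[symmetric, unfolded T_def] using tS
      by (metis T_def cInf_greatest empty_iff)
    then show False using \<delta>(1) by simp
  next
    case False
    then have m_le: "m \<le> 0" by simp
    have Tpos: "T > 0"
    proof (rule ccontr)
      assume "\<not> T > 0"
      then have "T = 0" using T0 by simp
      moreover have "0 \<le> Re (qf (\<rho> 0) x0)" using init by (simp add: density_state_def psd_def)
      ultimately have "m > 0" using eps by (simp add: m_def g_def)
      then show False using m_le by simp
    qed
    have m0: "m \<ge> 0"
    proof (rule ccontr)
      assume "\<not> m \<ge> 0"
      then have mneg: "- m > 0" by simp
      obtain \<delta> where \<delta>: "\<delta> > 0" "\<And>s y. s \<ge> 0 \<Longrightarrow> \<bar>s - T\<bar> < \<delta> \<Longrightarrow> norm y = 1 \<Longrightarrow> \<bar>g s y - g T y\<bar> < - m"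
        using cont[OF mneg] by blast
      define s where "s = T - min \<delta> T / 2"
      have s: "0 \<le> s" "s < T" "\<bar>s - T\<bar> < \<delta>" using \<delta>(1) Tpos by (auto simp: s_def min_def)
      have "\<bar>g s x0 - m\<bar> < - m" using \<delta>(2)[OF s(1) s(3) nx0] by (simp add: m_def)
      moreover have "g s x0 > 0" by (rule below[OF s(1) s(2) nx0])
      ultimately show False by simp
    qed
    have m00: "m = 0" using m0 m_le by simp
    define c where "c = \<epsilon> * exp (K * T)"
    define Q where "Q = \<rho> T + c *\<^sub>R mat 1"
    have qQ: "Re (qf Q y) = Re (qf (\<rho> T) y) + c * (norm y)\<^sup>2" for y
      by (simp add: Q_def qf_add qf_scaleR herm_inner_self)
    have saQ: "self_adjoint Q"
      using herm_rho[OF T0] by (simp add: Q_def self_adjoint_def adj_add adj_scaleR)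
    have "0 \<le> Re (qf Q y)" for y
    proof (rule unit_nonneg)
      fix u :: "complex^'n" assume "norm u = 1"
      then show "0 \<le> Re (qf Q u)" using mmin[of u] m00 qQ[of u] by (simp add: g_def c_def)
    qed
    then have psdQ: "psd Q" using saQ by (simp add: psd_def)
    have "Re (qf Q x0) = 0" using qQ[of x0] nx0 m00 by (simp add: m_def g_def c_def)
    then have Qx: "Q *v x0 = 0" by (rule psd_kernel[OF psdQ])
    have lk: "0 \<le> Re (qf (lindblad H L Q) x0)" by (rule lind_kernel[OF psdQ Qx])
    have lr: "lindblad H L (\<rho> T) = lindblad H L Q - c *\<^sub>R N"
      by (simp add: Q_def lindblad_add lindblad_scaleR N_def)
    define \<gamma> where "\<gamma> s = g s x0" for s
    define D where "D = Re (qf (lindblad H L (\<rho> T)) x0) + \<epsilon> * (exp (K * T) * K)"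
    have dg: "(\<gamma> has_real_derivative D) (at T within {0..})"
    proof -
      have a: "((\<lambda>s. Re (qf (\<rho> s) x0)) has_real_derivative Re (qf (lindblad H L (\<rho> T)) x0)) (at T within {0..})"
        unfolding has_real_derivative_iff_has_vector_derivative
        by (rule bounded_linear.has_vector_derivative[OF bl_qf d[OF T0]])
      have b: "((\<lambda>s. \<epsilon> * exp (K * s)) has_real_derivative \<epsilon> * (exp (K * T) * K)) (at T within {0..})"
        by (auto intro!: derivative_eq_intros)
      show ?thesis unfolding \<gamma>_def g_def D_def by (rule DERIV_add[OF a b])
    qed
    have dg': "(\<gamma> has_real_derivative D) (at T)"
    proof -
      have "(\<gamma> has_real_derivative D) (at T within {0<..})"
        using has_field_derivative_subset[OF dg, of "{0<..}"] by fastforce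
      moreover have "at T within {0<..} = at T" using Tpos by (intro at_within_open) auto
      ultimately show ?thesis by simp
    qed
    have "Re (qf N x0) \<le> n2 * norm N"
      using abs_Re_le_cmod[of "qf N x0"] quad_bound[of x0 N] nx0 by (simp add: n2_def)
    then have NK: "Re (qf N x0) < K" by (simp add: K_def n2_def)
    have "D = Re (qf (lindblad H L Q) x0) + c * (K - Re (qf N x0))"
      unfolding D_def lr qf_diff qf_scaleR c_def by (simp add: algebra_simps)
    moreover have "c > 0" using eps by (simp add: c_def)
    ultimately have Dpos: "D > 0" using lk NK by (simp add: add_nonneg_pos)
    obtain dd where dd: "dd > 0" "\<And>h. h > 0 \<Longrightarrow> h < dd \<Longrightarrow> \<gamma> (T - h) < \<gamma> T"
      using DERIV_pos_inc_left[OF dg' Dpos] by blast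
    define h where "h = min dd T / 2"
    have h: "h > 0" "h < dd" "0 \<le> T - h" "T - h < T" using dd(1) Tpos by (auto simp: h_def min_def)
    have "\<gamma> (T - h) < 0" using dd(2)[OF h(1) h(2)] m00 by (simp add: \<gamma>_def m_def)
    moreover have "\<gamma> (T - h) > 0" unfolding \<gamma>_def by (rule below[OF h(3) h(4) nx0])
    ultimately show False by simp
  qed
qed

lemma psd_rho: "t \<ge> 0 \<Longrightarrow> psd (\<rho> t)"
proof -
  assume t: "t \<ge> 0"
  define K where "K = (of_nat CARD('n)^2 * norm (lindblad H L (mat 1)) + 1)"
  have "0 \<le> Re (qf (\<rho> t) y)" for y
  proof (rule unit_nonneg)
    fix u :: "complex^'n" assume u: "norm u = 1"
    show "0 \<le> Re (qf (\<rho> t) u)"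
    proof (rule ccontr)
      assume "\<not> 0 \<le> Re (qf (\<rho> t) u)"
      then have a: "- Re (qf (\<rho> t) u) > 0" by simp
      define \<epsilon> where "\<epsilon> = - Re (qf (\<rho> t) u) / (2 * exp (K * t))"
      have "0 < - Re (qf (\<rho> t) u) / (2 * exp (K * t))" using a by (intro divide_pos_pos) auto
      then have e0: "\<epsilon> > 0" by (simp only: \<epsilon>_def)
      have "0 < Re (qf (\<rho> t) u) + \<epsilon> * exp (K * t)"
        using psd_rho_aux[OF e0 t u] by (simp add: K_def)
      also have "\<epsilon> * exp (K * t) = - Re (qf (\<rho> t) u) / 2" by (simp add: \<epsilon>_def)
      finally show False using a by simp
    qed
  qed
  then show ?thesis using herm_rho[OF t] by (simp add: psd_def)
qed

end



lemma psd_bound: "self_adjoint A \<Longrightarrow> psd ((of_nat CARD('n)^2 * norm A) *\<^sub>R mat 1 - (A::complex^'n::finite^'n))"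
proof -
  assume sa: "self_adjoint A"
  define \<alpha> where "\<alpha> = (of_nat CARD('n)^2 * norm A :: real)"
  have "self_adjoint (\<alpha> *\<^sub>R mat 1 - A)" using sa by (simp add: self_adjoint_def adj_diff adj_scaleR)
  moreover have "0 \<le> Re (qf (\<alpha> *\<^sub>R mat 1 - A) y)" for y
  proof -
    have "Re (qf A y) \<le> \<alpha> * (norm y)\<^sup>2"
      using abs_Re_le_cmod[of "qf A y"] quad_bound[of y A] by (simp add: \<alpha>_def)
    then show ?thesis by (simp add: qf_diff qf_scaleR herm_inner_self)
  qed
  ultimately show ?thesis by (simp add: psd_def \<alpha>_def)
qed

lemma trace_uminus: "trace (- (A::complex^'n::finite^'n)) = - trace A"
  by (simp add: trace_def sum_negf)

lemma amgm_aux: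
  fixes b x y :: real
  assumes "b\<^sup>2 \<le> x * y" "x \<ge> 0" "y \<ge> 0"
  shows "2 * \<bar>b\<bar> \<le> x + y"
proof (rule power2_le_imp_le)
  have "(2 * \<bar>b\<bar>)\<^sup>2 = 4 * b\<^sup>2" by (simp add: power2_eq_square)
  also have "\<dots> \<le> 4 * (x * y)" using assms(1) by simp
  also have "\<dots> \<le> (x + y)\<^sup>2"
  proof -
    have "(x + y)\<^sup>2 - 4 * (x * y) = (x - y)\<^sup>2" by (simp add: power2_eq_square algebra_simps)
    then show ?thesis using zero_le_power2[of "x - y"] by linarith
  qed
  finally show "(2 * \<bar>b\<bar>)\<^sup>2 \<le> (x + y)\<^sup>2" .
qed (use assms in simp)

theorem lemma11:
  fixes H L V :: "complex^'n::finite^'n" and c :: real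
    and \<rho> :: "real \<Rightarrow> complex^'n^'n"
  assumes "self_adjoint H"
    and "V ** H = H ** V"
    and "lyapunov L V"
    and "c > 0"
    and "loewner_le (c *\<^sub>R (V ** V)) (dissipation L V)"
    and "density_state (\<rho> 0)"
    and "\<And>t. t \<ge> 0 \<Longrightarrow> (\<rho> has_vector_derivative lindblad H L (\<rho> t)) (at t within {0..})"
  shows "((\<lambda>t. trace (V ** \<rho> t)) \<longlongrightarrow> 0) at_top"
proof -
  note sa = assms(1) and d = assms(7) and init = assms(6) and c0 = assms(4)
  have psdV: "psd V" using assms(3) by (simp add: lyapunov_def)
  have saV: "self_adjoint V" using psdV psd_def by blast
  have adjV: "adj V = V" using saV self_adjoint_def by blast
  define A where "A = - gen L V"
  have psdA: "psd A" using assms(3) by (simp add: lyapunov_def loewner_le_def A_def)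
  have saA: "self_adjoint A" using psdA psd_def by blast
  define DD where "DD = dissipation L V"
  have psdD: "psd (DD - c *\<^sub>R (V ** V))" using assms(5) by (simp add: loewner_le_def DD_def)
  have P: "psd (\<rho> t)" if "t \<ge> 0" for t using psd_rho[OF sa d init that] .
  have tr1: "trace (\<rho> t) = 1" if "t \<ge> 0" for t using trace_rho[OF sa d init that] .
  define f where "f t = Re (trace (V ** \<rho> t))" for t
  define g where "g t = Re (trace (V ** V ** \<rho> t))" for t
  define a where "a t = Re (trace (A ** \<rho> t))" for t
  define \<alpha> where "\<alpha> = (of_nat CARD('n)^2 * norm A :: real)"
  define \<beta> where "\<beta> = (of_nat CARD('n)^2 * norm (V ** V) :: real)"
  have \<alpha>0: "\<alpha> \<ge> 0" by (simp add: \<alpha>_def)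
  have VVH: "(V ** V) ** H = H ** (V ** V)" using assms(2) by (metis matrix_mul_assoc)
  have a0: "a t \<ge> 0" if "t \<ge> 0" for t unfolding a_def by (rule psd_trace_nonneg[OF psdA P[OF that]])
  have f0: "f t \<ge> 0" if "t \<ge> 0" for t unfolding f_def by (rule psd_trace_nonneg[OF psdV P[OF that]])
  have df: "(f has_real_derivative - a t) (at t within {0..})" if "t \<ge> 0" for t
  proof -
    have "(f has_real_derivative Re (trace (V ** lindblad H L (\<rho> t)))) (at t within {0..})"
      unfolding f_def by (rule deriv_Re_trace[OF sa d init that])
    moreover have "trace (V ** lindblad H L (\<rho> t)) = - trace (A ** \<rho> t)"
      by (simp add: trace_lindblad[OF assms(2)] A_def matrix_uminus_left trace_uminus)
    ultimately show ?thesis by (simp add: a_def)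
  qed
  have g_ge_f2: "(f t)\<^sup>2 \<le> g t" if "t \<ge> 0" for t
  proof -
    have "(cmod (trace (mat 1 ** V ** \<rho> t)))\<^sup>2 \<le> Re (trace (mat 1 ** \<rho> t)) * Re (trace (adj V ** mat 1 ** V ** \<rho> t))"
      by (rule cs_trace[OF psd_mat1 P[OF that]])
    then have "(cmod (trace (V ** \<rho> t)))\<^sup>2 \<le> g t" by (simp add: tr1[OF that] adjV g_def)
    moreover have "(f t)\<^sup>2 \<le> (cmod (trace (V ** \<rho> t)))\<^sup>2"
      unfolding f_def using power_mono[OF abs_Re_le_cmod abs_ge_zero, of "trace (V ** \<rho> t)" 2] by simp
    ultimately show ?thesis by simp
  qed
  have g_le: "g t \<le> \<beta>" if "t \<ge> 0" for t
  proof -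
    have "psd (\<beta> *\<^sub>R mat 1 - V ** V)"
      unfolding \<beta>_def by (rule psd_bound) (simp add: self_adjoint_def adj_mult adjV)
    then have "0 \<le> Re (trace ((\<beta> *\<^sub>R mat 1 - V ** V) ** \<rho> t))" by (rule psd_trace_nonneg[OF _ P[OF that]])
    then show ?thesis by (simp add: matrix_diff_rdistrib trace_sub scaleR_mult_left trace_scaleR tr1[OF that] g_def)
  qed
  have dg: "(g has_real_derivative Re (trace (gen L (V ** V) ** \<rho> t))) (at t within {0..})" if "t \<ge> 0" for t
  proof -
    have "(g has_real_derivative Re (trace ((V ** V) ** lindblad H L (\<rho> t)))) (at t within {0..})"
      unfolding g_def by (rule deriv_Re_trace[OF sa d init that])
    then show ?thesis by (simp add: trace_lindblad[OF VVH])
  qed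
  have gV: "gen L (V ** V) = DD - A ** V - V ** A"
    by (simp add: DD_def dissipation_def adjV A_def matrix_uminus_left matrix_uminus_right)
  have g'bound: "Re (trace (gen L (V ** V) ** \<rho> t)) \<ge> (c/2) * g t - (2 * \<alpha> / c) * a t" if t: "t \<ge> 0" for t
  proof -
    define b where "b = trace (A ** V ** \<rho> t)"
    have e1: "trace (gen L (V ** V) ** \<rho> t) = trace (DD ** \<rho> t) - b - trace (V ** A ** \<rho> t)"
      by (simp add: gV matrix_diff_rdistrib trace_sub b_def)
    have e2: "Re (trace (V ** A ** \<rho> t)) = Re b"
    proof -
      have "cnj (trace (V ** A ** \<rho> t)) = trace (adj (V ** A ** \<rho> t))" by (rule trace_adj[symmetric])
      also have "\<dots> = trace (\<rho> t ** (A ** V))"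
        using herm_rho[OF sa d init t] saA by (simp add: adj_mult adjV self_adjoint_def matrix_mul_assoc)
      also have "\<dots> = b" unfolding b_def by (rule trace_mul_sym)
      finally have "cnj (trace (V ** A ** \<rho> t)) = b" .
      then show ?thesis by (metis complex_cnj_cnj cnj.sel(1))
    qed
    have e3: "Re (trace (DD ** \<rho> t)) \<ge> c * g t"
    proof -
      have "0 \<le> Re (trace ((DD - c *\<^sub>R (V ** V)) ** \<rho> t))" by (rule psd_trace_nonneg[OF psdD P[OF t]])
      then show ?thesis
        by (simp add: matrix_diff_rdistrib trace_sub scaleR_mult_left trace_scaleR g_def matrix_mul_assoc)
    qed
    have e4: "(cmod b)\<^sup>2 \<le> a t * (\<alpha> * g t)"
    proof -
      have "(cmod b)\<^sup>2 \<le> a t * Re (trace (adj V ** A ** V ** \<rho> t))"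
        unfolding a_def b_def by (rule cs_trace[OF psdA P[OF t]])
      moreover have "Re (trace (adj V ** A ** V ** \<rho> t)) \<le> \<alpha> * g t"
      proof -
        have "psd (adj V ** (\<alpha> *\<^sub>R mat 1 - A) ** V)"
          unfolding \<alpha>_def by (rule psd_congr[OF psd_bound[OF saA]])
        then have "0 \<le> Re (trace (adj V ** (\<alpha> *\<^sub>R mat 1 - A) ** V ** \<rho> t))"
          by (rule psd_trace_nonneg[OF _ P[OF t]])
        then show ?thesis
          by (simp add: adjV matrix_diff_ldistrib matrix_diff_rdistrib trace_sub scaleR_mult_left
              scaleR_mult_right trace_scaleR g_def)
      qed
      moreover have "a t \<ge> 0" by (rule a0[OF t])
      ultimately show ?thesis by (meson mult_left_mono order_trans)
    qed
    have gt0: "g t \<ge> 0" using g_ge_f2[OF t] by (meson order_trans zero_le_power2)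
    have "2 * \<bar>cmod b\<bar> \<le> (c/2) * g t + (2 * \<alpha> / c) * a t"
    proof (rule amgm_aux)
      show "(cmod b)\<^sup>2 \<le> ((c/2) * g t) * ((2 * \<alpha> / c) * a t)" using e4 c0 by (simp add: field_simps)
      show "0 \<le> (c/2) * g t" using c0 gt0 by simp
      show "0 \<le> (2 * \<alpha> / c) * a t" using c0 \<alpha>0 a0[OF t] by simp
    qed
    moreover have "Re b \<le> cmod b" by (rule complex_Re_le_cmod)
    ultimately show ?thesis using e1 e2 e3 by simp
  qed
  have fmono: "f t \<le> f s" if "0 \<le> s" "s \<le> t" for s t
  proof -
    have "- f s \<le> - f t"
      by (rule mono_deriv[of "\<lambda>t. - f t" "\<lambda>t. a t"]) (use that a0 DERIV_minus[OF df] in auto)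
    then show ?thesis by simp
  qed
  have lim: "\<exists>T\<ge>0. f T < e" if e: "e > 0" for e
  proof (rule ccontr)
    assume "\<not> ?thesis"
    then have fe: "f t \<ge> e" if "t \<ge> 0" for t using that by force
    define k where "k t = g t - (2 * \<alpha> / c) * f t - (c/2) * e\<^sup>2 * t" for t
    have dk: "(k has_real_derivative (Re (trace (gen L (V ** V) ** \<rho> t)) + (2 * \<alpha> / c) * a t - (c/2) * e\<^sup>2))
       (at t within {0..})" if "t \<ge> 0" for t
      unfolding k_def using that c0
      by (auto intro!: derivative_eq_intros dg df)
    have kpos: "Re (trace (gen L (V ** V) ** \<rho> t)) + (2 * \<alpha> / c) * a t - (c/2) * e\<^sup>2 \<ge> 0" if "t > 0" for t
    proof -
      have t0: "t \<ge> 0" using that by simp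
      have "e\<^sup>2 \<le> (f t)\<^sup>2" using fe[OF t0] e by (simp add: power_mono)
      then have "e\<^sup>2 \<le> g t" using g_ge_f2[OF t0] by simp
      then have "(c/2) * e\<^sup>2 \<le> (c/2) * g t" using c0 by (intro mult_left_mono) auto
      then show ?thesis using g'bound[OF t0] by linarith
    qed
    define t where "t = (\<beta> - (g 0 - (2 * \<alpha> / c) * f 0) + 1) / ((c/2) * e\<^sup>2) + 1"
    have ce: "(c/2) * e\<^sup>2 > 0" using c0 e by simp
    have t0: "t \<ge> 0"
    proof -
      have "g 0 \<le> \<beta>" by (rule g_le) simp
      moreover have "(2 * \<alpha> / c) * f 0 \<ge> 0" using \<alpha>0 c0 f0[of 0] by simp
      ultimately have "\<beta> - (g 0 - (2 * \<alpha> / c) * f 0) + 1 \<ge> 0" by simp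
      then show ?thesis using ce by (simp add: t_def)
    qed
    have "k 0 \<le> k t"
      by (rule mono_deriv[OF dk kpos]) (use t0 in auto)
    moreover have "k t \<le> \<beta> - (c/2) * e\<^sup>2 * t"
    proof -
      have "(2 * \<alpha> / c) * f t \<ge> 0" using \<alpha>0 c0 f0[OF t0] by simp
      then show ?thesis using g_le[OF t0] by (simp add: k_def)
    qed
    moreover have "(c/2) * e\<^sup>2 * t = \<beta> - (g 0 - (2 * \<alpha> / c) * f 0) + 1 + (c/2) * e\<^sup>2"
    proof -
      define X where "X = \<beta> - (g 0 - (2 * \<alpha> / c) * f 0) + 1"
      define Y where "Y = (c/2) * e\<^sup>2"
      have Y0: "Y > 0" using ce unfolding Y_def .
      have tt: "t = X / Y + 1" unfolding t_def X_def Y_def ..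
      have "Y * t = Y * (X / Y) + Y" unfolding tt by (simp only: distrib_left mult_1_right)
      also have "Y * (X / Y) = X" using Y0 by simp
      finally have "Y * t = X + Y" .
      then show ?thesis unfolding X_def Y_def .
    qed
    ultimately show False using ce by (simp add: k_def)
  qed
  have trf: "trace (V ** \<rho> t) = of_real (f t)" if "t \<ge> 0" for t
    unfolding f_def by (rule trace_herm_real[OF saV herm_rho[OF sa d init that]])
  show ?thesis
  proof (rule tendstoI)
    fix e :: real assume e: "e > 0"
    obtain T where T: "T \<ge> 0" "f T < e" using lim[OF e] by blast
    have "dist (trace (V ** \<rho> t)) 0 < e" if "t \<ge> T" for t
    proof -
      have t0: "t \<ge> 0" using T that by linarith
      have "0 \<le> f t" by (rule f0[OF t0])
      moreover have "f t \<le> f T" by (rule fmono[OF T(1) that])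
      moreover have "dist (trace (V ** \<rho> t)) 0 = \<bar>f t\<bar>" unfolding trf[OF t0] by simp
      ultimately show ?thesis using T by linarith
    qed
    then show "\<forall>\<^sub>F t in at_top. dist (trace (V ** \<rho> t)) 0 < e"
      unfolding eventually_at_top_linorder by blast
  qed
qed


end
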